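(* Let $C([0,1])$ be the space of continuous real functions on $[0,1]$ with the norm $\|f\|_\infty = \sup_{t\in[0,1]}|f(t)|$ and its Borel $\sigma$-algebra $\mathcal{A}$ (for the norm topology). Let $\{X_{Q,\mathbf{d}} : \Omega \to C([0,1]) \mid \mathbf{d}\in D^n\}$ be a family of measurable maps. For $k\ge1$ and $0\le t_1<\cdots<t_k\le1$ let $\pi_{t_1,\dots,t_k}: C([0,1]) \to \mathbb{R}^k$, $f \mapsto (f(t_1),\dots,f(t_k))$, and $X^{t_1,\dots,t_k}_{Q,\mathbf{d}} = \pi_{t_1,\dots,t_k}\circ X_{Q,\mathbf{d}}$. Let $\epsilon\ge0$, $0\le\delta\le1$. Suppose that for every $k$ and every $t_1<\dots<t_k$ in $[0,1]$, $$\mathbb{P}(X^{t_1,\dots,t_k}_{Q,\mathbf{d}}\in B) \le e^\epsilon\, \mathbb{P}(X^{t_1,\dots,t_k}_{Q,\mathbf{d}'}\in B) + \delta$$ for all $\mathbf{d}\sim\mathbf{d}'$ in $D^n$ and all Borel sets $B\subseteq\mathbb{R}^k$. Then $\mathbb{P}(X_{Q,\mathbf{d}}\in A)\le e^\epsilon\,\mathbb{P}(X_{Q,\mathbf{d}'}\in A)+\delta$ for all $\mathbf{d}\sim\mathbf{d}'$ in $D^n$ and all $A\in\mathcal{A}$.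
   Context: $(U,\rho)$ is a metric space, $D\subseteq U$, $n\ge1$, and $(\Omega,\mathcal{F},\mathbb{P})$ is a probability space. Two databases $\mathbf{d}=(d_1,\dots,d_n), \mathbf{d}'=(d_1',\dots,d_n') \in D^n$ are neighbours, written $\mathbf{d}\sim\mathbf{d}'$, if there is exactly one index $j$ with $d_j \ne d_j'$ (and $d_i = d_i'$ for all $i\ne j$); the relation is symmetric. *)

theory Defs
  imports "HOL-Analysis.Analysis" "HOL-Probability.Probability"
begin

definition neighbours :: "'a list \<Rightarrow> 'a list \<Rightarrow> bool" where
  "neighbours d d' \<longleftrightarrow> length d = length d' \<and>
     (\<exists>!j. j < length d \<and> d ! j \<noteq> d' ! j)"

definition databases :: "'a set \<Rightarrow> nat \<Rightarrow> 'a list set" where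
  "databases D n = {d. length d = n \<and> set d \<subseteq> D}"

text \<open>The space C([0,1]) with the sup norm, realised isometrically inside the Banach
  space of bounded continuous functions real \<Rightarrow> real: a function continuous on [0,1] is
  identified with its constant extension f(t) = f(max 0 (min 1 t)).  The sup norm of
  bcontfun then equals the sup over [0,1].\<close>
definition clamp01 :: "real \<Rightarrow> real" where
  "clamp01 t = max 0 (min 1 t)"

definition C01 :: "(real, real) bcontfun set" where
  "C01 = {f. \<forall>t. apply_bcontfun f t = apply_bcontfun f (clamp01 t)}"

definition C01_borel :: "(real, real) bcontfun measure" where
  "C01_borel = restrict_space borel C01"

text \<open>R^k as functions on {..<k} with the product (= Borel) sigma-algebra.\<close>
definition Rk :: "nat \<Rightarrow> (nat \<Rightarrow> real) measure" where
  "Rk k = PiM {..<k} (\<lambda>_. borel)"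

definition proj :: "nat \<Rightarrow> (nat \<Rightarrow> real) \<Rightarrow> (real, real) bcontfun \<Rightarrow> (nat \<Rightarrow> real)" where
  "proj k t f = (\<lambda>i\<in>{..<k}. apply_bcontfun f (t i))"

end

theory Submission
  imports Defs
begin

definition sdiff :: "'x set \<Rightarrow> 'x set \<Rightarrow> 'x set" where
  "sdiff A C = (A - C) \<union> (C - A)"

lemma approx_sigma:
  assumes alg: "algebra \<Omega> G" and fm: "finite_measure \<mu>" "finite_measure \<nu>"
    and s1: "sets \<mu> = sigma_sets \<Omega> G" and s2: "sets \<nu> = sigma_sets \<Omega> G"
    and A: "A \<in> sigma_sets \<Omega> G"
  shows "\<And>e. e > 0 \<Longrightarrow> \<exists>C\<in>G. measure \<mu> (sdiff A C) < e \<and> measure \<nu> (sdiff A C) < e"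
proof -
  interpret algebra \<Omega> G by (rule alg)
  interpret S: sigma_algebra \<Omega> "sigma_sets \<Omega> G" using sigma_algebra_sigma_sets[OF space_closed] .
  show "\<And>e. e > 0 \<Longrightarrow> \<exists>C\<in>G. measure \<mu> (sdiff A C) < e \<and> measure \<nu> (sdiff A C) < e"
  using A
proof (induct rule: sigma_sets.induct)
  case (Basic a)
  then show ?case by (intro bexI[of _ a]) (auto simp: sdiff_def)
next
  case Empty
  then show ?case using empty_sets by (intro bexI[of _ "{}"]) (auto simp: sdiff_def)
next
  case (Compl a)
  obtain C where C: "C \<in> G" "measure \<mu> (sdiff a C) < e" "measure \<nu> (sdiff a C) < e"
    using Compl(2)[OF Compl(3)] by blast
  have "a \<subseteq> \<Omega>" using Compl(1) sigma_sets_into_sp[OF space_closed] by blast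
  moreover have "C \<subseteq> \<Omega>" using C(1) space_closed by blast
  ultimately have "sdiff (\<Omega> - a) (\<Omega> - C) = sdiff a C" by (auto simp: sdiff_def)
  then show ?case using C compl_sets[OF C(1)] by (intro bexI[of _ "\<Omega> - C"]) auto
next
  case (Union A)
  have GS: "G \<subseteq> sigma_sets \<Omega> G" by (auto intro: sigma_sets.Basic)
  interpret m1: finite_measure \<mu> by fact
  interpret m2: finite_measure \<nu> by fact
  have sd_sets: "sdiff X C \<in> sigma_sets \<Omega> G" if "X \<in> sigma_sets \<Omega> G" "C \<in> G" for X C
    using that GS unfolding sdiff_def by (intro S.Un S.Diff) auto
  define B where "B n = (\<Union>i<n. A i)" for n
  have Bs: "B n \<in> sigma_sets \<Omega> G" for n
    unfolding B_def using Union(1) by (intro sigma_sets_UNION) auto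
  have fin: "\<And>e. e > 0 \<Longrightarrow> \<exists>C\<in>G. measure \<mu> (sdiff (B n) C) < e \<and> measure \<nu> (sdiff (B n) C) < e" for n
  proof (induct n)
    case 0
    then show ?case using empty_sets by (intro bexI[of _ "{}"]) (auto simp: sdiff_def B_def)
  next
    case (Suc n e)
    obtain C1 where C1: "C1 \<in> G" "measure \<mu> (sdiff (B n) C1) < e/2" "measure \<nu> (sdiff (B n) C1) < e/2"
      using Suc(1)[of "e/2"] Suc(2) by auto
    have e2: "e/2 > 0" using Suc(2) by simp
    obtain C2 where C2: "C2 \<in> G" "measure \<mu> (sdiff (A n) C2) < e/2" "measure \<nu> (sdiff (A n) C2) < e/2"
      using Union(2)[of "e/2" n, OF e2] by blast
    have BS: "B (Suc n) = B n \<union> A n" unfolding B_def by (auto simp: lessThan_Suc)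
    have sub: "sdiff (B (Suc n)) (C1 \<union> C2) \<subseteq> sdiff (B n) C1 \<union> sdiff (A n) C2"
      unfolding BS sdiff_def by auto
    have m1: "sdiff (B n) C1 \<in> sigma_sets \<Omega> G" "sdiff (A n) C2 \<in> sigma_sets \<Omega> G"
      using sd_sets Bs Union(1) C1 C2 by auto
    have "measure \<mu> (sdiff (B (Suc n)) (C1 \<union> C2)) \<le> measure \<mu> (sdiff (B n) C1 \<union> sdiff (A n) C2)"
      using m1 s1 by (intro m1.finite_measure_mono[OF sub]) auto
    also have "\<dots> \<le> measure \<mu> (sdiff (B n) C1) + measure \<mu> (sdiff (A n) C2)"
      using m1 s1 by (intro measure_Un_le) auto
    finally have 1: "measure \<mu> (sdiff (B (Suc n)) (C1 \<union> C2)) < e" using C1 C2 by linarith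
    have "measure \<nu> (sdiff (B (Suc n)) (C1 \<union> C2)) \<le> measure \<nu> (sdiff (B n) C1 \<union> sdiff (A n) C2)"
      using m1 s2 by (intro m2.finite_measure_mono[OF sub]) auto
    also have "\<dots> \<le> measure \<nu> (sdiff (B n) C1) + measure \<nu> (sdiff (A n) C2)"
      using m1 s2 by (intro measure_Un_le) auto
    finally have 2: "measure \<nu> (sdiff (B (Suc n)) (C1 \<union> C2)) < e" using C1 C2 by linarith
    show ?case using 1 2 Un[OF C1(1) C2(1)] by blast
  qed
  have inc: "incseq B" unfolding B_def incseq_def by (auto intro: less_le_trans)
  have UB: "(\<Union>n. B n) = (\<Union>i. A i)" unfolding B_def by auto
  have L1: "(\<lambda>n. measure \<mu> (B n)) \<longlonglongrightarrow> measure \<mu> (\<Union>i. A i)"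
    using m1.finite_Lim_measure_incseq[of B] inc Bs s1 UB by auto
  have L2: "(\<lambda>n. measure \<nu> (B n)) \<longlonglongrightarrow> measure \<nu> (\<Union>i. A i)"
    using m2.finite_Lim_measure_incseq[of B] inc Bs s2 UB by auto
  have "eventually (\<lambda>n. measure \<mu> (\<Union>i. A i) - e/2 < measure \<mu> (B n)) sequentially"
    using order_tendstoD(1)[OF L1, of "measure \<mu> (\<Union>i. A i) - e/2"] Union(3) by auto
  moreover have "eventually (\<lambda>n. measure \<nu> (\<Union>i. A i) - e/2 < measure \<nu> (B n)) sequentially"
    using order_tendstoD(1)[OF L2, of "measure \<nu> (\<Union>i. A i) - e/2"] Union(3) by auto
  ultimately obtain N where N: "measure \<mu> (\<Union>i. A i) - e/2 < measure \<mu> (B N)"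
      "measure \<nu> (\<Union>i. A i) - e/2 < measure \<nu> (B N)"
    unfolding eventually_sequentially by (metis order.refl max.cobounded1 max.cobounded2)
  obtain C where C: "C \<in> G" "measure \<mu> (sdiff (B N) C) < e/2" "measure \<nu> (sdiff (B N) C) < e/2"
    using fin[of "e/2" N] Union(3) by auto
  have US: "(\<Union>i. A i) \<in> sigma_sets \<Omega> G" using Union(1) by (intro sigma_sets.Union) auto
  have BsubU: "B N \<subseteq> (\<Union>i. A i)" unfolding B_def by auto
  have sub: "sdiff (\<Union>i. A i) C \<subseteq> ((\<Union>i. A i) - B N) \<union> sdiff (B N) C"
    using BsubU unfolding sdiff_def by auto
  have DS: "(\<Union>i. A i) - B N \<in> sigma_sets \<Omega> G" using US Bs by (intro S.Diff) 
  have SD: "sdiff (B N) C \<in> sigma_sets \<Omega> G" using sd_sets Bs C by auto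
  have "measure \<mu> (sdiff (\<Union>i. A i) C) \<le> measure \<mu> (((\<Union>i. A i) - B N) \<union> sdiff (B N) C)"
    using DS SD s1 by (intro m1.finite_measure_mono[OF sub]) auto
  also have "\<dots> \<le> measure \<mu> ((\<Union>i. A i) - B N) + measure \<mu> (sdiff (B N) C)"
    using DS SD s1 by (intro measure_Un_le) auto
  also have "measure \<mu> ((\<Union>i. A i) - B N) = measure \<mu> (\<Union>i. A i) - measure \<mu> (B N)"
    using US Bs s1 BsubU by (intro m1.finite_measure_Diff) auto
  finally have 1: "measure \<mu> (sdiff (\<Union>i. A i) C) < e" using N C by linarith
  have "measure \<nu> (sdiff (\<Union>i. A i) C) \<le> measure \<nu> (((\<Union>i. A i) - B N) \<union> sdiff (B N) C)"
    using DS SD s2 by (intro m2.finite_measure_mono[OF sub]) auto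
  also have "\<dots> \<le> measure \<nu> ((\<Union>i. A i) - B N) + measure \<nu> (sdiff (B N) C)"
    using DS SD s2 by (intro measure_Un_le) auto
  also have "measure \<nu> ((\<Union>i. A i) - B N) = measure \<nu> (\<Union>i. A i) - measure \<nu> (B N)"
    using US Bs s2 BsubU by (intro m2.finite_measure_Diff) auto
  finally have 2: "measure \<nu> (sdiff (\<Union>i. A i) C) < e" using N C by linarith
  show ?case using 1 2 C(1) by blast
qed
qed

definition Cyl :: "(real, real) bcontfun set set" where
  "Cyl = {C01 \<inter> {f. restrict (apply_bcontfun f) T \<in> B} | T B. finite T \<and> T \<noteq> {} \<and> T \<subseteq> {0..1}
      \<and> B \<in> sets (PiM T (\<lambda>_. borel :: real measure))}"

lemma clamp01_in: "clamp01 x \<in> {0..1}"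
  by (auto simp: clamp01_def)

lemma C01_clamp: "f \<in> C01 \<Longrightarrow> apply_bcontfun f x = apply_bcontfun f (clamp01 x)"
  by (auto simp: C01_def)

lemma space_C01: "space C01_borel = C01"
  by (simp add: C01_borel_def space_restrict_space)

lemma eval_cont: "continuous_on UNIV (\<lambda>f::(real, real) bcontfun. apply_bcontfun f x)"
  unfolding continuous_on_iff
  by (metis dist_fun_lt_imp_dist_val_lt)

lemma eval_meas: "(\<lambda>f. apply_bcontfun f x) \<in> borel_measurable C01_borel"
  unfolding C01_borel_def
  by (rule measurable_restrict_space1[OF borel_measurable_continuous_onI[OF eval_cont]])

lemma restr_meas: "(\<lambda>f. restrict (apply_bcontfun f) T) \<in> measurable C01_borel (PiM T (\<lambda>_. borel :: real measure))"
  by (rule measurable_restrict) (rule eval_meas)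

lemma cyl_sets: "Cyl \<subseteq> sets C01_borel"
proof
  fix C assume "C \<in> Cyl"
  then obtain T B where C: "C = C01 \<inter> {f. restrict (apply_bcontfun f) T \<in> B}"
    and B: "B \<in> sets (PiM T (\<lambda>_. borel :: real measure))" unfolding Cyl_def by blast
  have "(\<lambda>f. restrict (apply_bcontfun f) T) -` B \<inter> space C01_borel \<in> sets C01_borel"
    by (rule measurable_sets[OF restr_meas B])
  moreover have "(\<lambda>f. restrict (apply_bcontfun f) T) -` B \<inter> space C01_borel = C"
    unfolding C space_C01 by auto
  ultimately show "C \<in> sets C01_borel" by simp
qed

lemma restr_space: "restrict f T \<in> space (PiM T (\<lambda>_. borel :: real measure))"
  by (simp add: space_PiM)

lemma cyl_alg: "algebra C01 Cyl"
  unfolding algebra_iff_Un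
proof (intro conjI ballI)
  show "Cyl \<subseteq> Pow C01" unfolding Cyl_def by auto
  show "{} \<in> Cyl" unfolding Cyl_def
    by (rule CollectI, rule exI[of _ "{0}"], rule exI[of _ "{}"]) auto
next
  fix a assume "a \<in> Cyl"
  then obtain T B where C: "a = C01 \<inter> {f. restrict (apply_bcontfun f) T \<in> B}"
    and B: "B \<in> sets (PiM T (\<lambda>_. borel :: real measure))" and T: "finite T" "T \<noteq> {}" "T \<subseteq> {0..1}"
    unfolding Cyl_def by blast
  have "C01 - a = C01 \<inter> {f. restrict (apply_bcontfun f) T \<in> space (PiM T (\<lambda>_. borel :: real measure)) - B}"
    unfolding C using restr_space by blast
  then show "C01 - a \<in> Cyl" unfolding Cyl_def using T B by blast
next
  fix a b assume "a \<in> Cyl" "b \<in> Cyl"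
  then obtain T1 B1 T2 B2 where C1: "a = C01 \<inter> {f. restrict (apply_bcontfun f) T1 \<in> B1}"
    and B1: "B1 \<in> sets (PiM T1 (\<lambda>_. borel :: real measure))" and T1: "finite T1" "T1 \<noteq> {}" "T1 \<subseteq> {0..1}"
    and C2: "b = C01 \<inter> {f. restrict (apply_bcontfun f) T2 \<in> B2}"
    and B2: "B2 \<in> sets (PiM T2 (\<lambda>_. borel :: real measure))" and T2: "finite T2" "T2 \<noteq> {}" "T2 \<subseteq> {0..1}"
    unfolding Cyl_def by blast
  let ?T = "T1 \<union> T2"
  let ?B = "((\<lambda>y. restrict y T1) -` B1 \<inter> space (PiM ?T (\<lambda>_. borel :: real measure)))
          \<union> ((\<lambda>y. restrict y T2) -` B2 \<inter> space (PiM ?T (\<lambda>_. borel :: real measure)))"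
  have "?B \<in> sets (PiM ?T (\<lambda>_. borel :: real measure))"
    by (intro sets.Un measurable_sets[OF measurable_restrict_subset B1]
        measurable_sets[OF measurable_restrict_subset B2]) auto
  moreover have "a \<union> b = C01 \<inter> {f. restrict (apply_bcontfun f) ?T \<in> ?B}"
    unfolding C1 C2 using restr_space[of _ ?T] by (auto simp: restrict_restrict Int_absorb1 Int_absorb2
        inf_sup_absorb Int_commute)
  ultimately show "a \<union> b \<in> Cyl" unfolding Cyl_def using T1 T2 by blast
qed

lemma dense01:
  fixes h :: "real \<Rightarrow> real"
  assumes h: "continuous_on {0..1} h" and q: "\<forall>q\<in>\<rat> \<inter> {0..1}. h q \<le> r" and x: "x \<in> {0..1}"
  shows "h x \<le> r"
proof (rule ccontr)
  assume "\<not> h x \<le> r"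
  then have pos: "h x - r > 0" by simp
  obtain d where d: "d > 0" "\<forall>y\<in>{0..1}. dist y x < d \<longrightarrow> dist (h y) (h x) < h x - r"
    using h x pos unfolding continuous_on_iff by blast
  obtain y where y: "y \<in> \<rat>" "y \<in> {0..1}" "dist y x < d"
  proof (cases "x < 1")
    case True
    obtain q where "q \<in> \<rat>" "x < q" "q < min (x + d) 1" using Rats_dense_in_real[of x "min (x+d) 1"] True d by auto
    then show ?thesis using that x by (auto simp: dist_real_def)
  next
    case False
    then have "x = 1" using x by auto
    obtain q where "q \<in> \<rat>" "max (1 - d) 0 < q" "q < 1" using Rats_dense_in_real[of "max (1-d) 0" 1] d by auto
    then show ?thesis using that \<open>x = 1\<close> by (auto simp: dist_real_def)
  qed
  then have "dist (h y) (h x) < h x - r" using d by blast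
  moreover have "h y \<le> r" using q y by blast
  ultimately show False by (auto simp: dist_real_def)
qed

lemma ball_in:
  assumes c: "c \<in> C01"
  shows "{g \<in> C01. dist g c \<le> r} \<in> sigma_sets C01 Cyl"
proof -
  interpret S: sigma_algebra C01 "sigma_sets C01 Cyl"
    using sigma_algebra_sigma_sets algebra.axioms cyl_alg
    by (metis algebra_iff_Un)
  define Q where "Q = \<rat> \<inter> {0..(1::real)}"
  define E where "E q = C01 \<inter> {f. restrict (apply_bcontfun f) {q} \<in>
      (\<lambda>y. y q) -` cball (apply_bcontfun c q) r \<inter> space (PiM {q} (\<lambda>_. borel :: real measure))}" for q
  have EC: "E q \<in> Cyl" if "q \<in> Q" for q
  proof -
    have "(\<lambda>y. y q) -` cball (apply_bcontfun c q) r \<inter> space (PiM {q} (\<lambda>_. borel :: real measure))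
        \<in> sets (PiM {q} (\<lambda>_. borel :: real measure))"
      by (rule measurable_sets[OF measurable_component_singleton]) auto
    then show ?thesis unfolding Cyl_def E_def using that Q_def by blast
  qed
  have E: "E q = C01 \<inter> {g. dist (apply_bcontfun c q) (apply_bcontfun g q) \<le> r}" for q
    unfolding E_def by (auto simp: space_PiM)
  have cQ: "countable Q" unfolding Q_def by (rule countable_subset[OF _ countable_rat]) auto
  have nQ: "Q \<noteq> {}" unfolding Q_def using Rats_0 by (metis IntI atLeastAtMost_iff empty_iff order_refl zero_le_one)
  have eq: "{g \<in> C01. dist g c \<le> r} = (\<Inter>q\<in>Q. E q)"
  proof
    show "{g \<in> C01. dist g c \<le> r} \<subseteq> (\<Inter>q\<in>Q. E q)"
      unfolding E using dist_bounded by (auto simp: dist_commute intro: order_trans)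
  next
    show "(\<Inter>q\<in>Q. E q) \<subseteq> {g \<in> C01. dist g c \<le> r}"
    proof
      fix g assume g: "g \<in> (\<Inter>q\<in>Q. E q)"
      then have gC: "g \<in> C01" using nQ unfolding E by auto
      have "\<forall>q\<in>\<rat> \<inter> {0..1}. dist (apply_bcontfun g q) (apply_bcontfun c q) \<le> r"
      proof
        fix q :: real assume "q \<in> \<rat> \<inter> {0..1}"
        then have "g \<in> E q" using g Q_def by auto
        then show "dist (apply_bcontfun g q) (apply_bcontfun c q) \<le> r"
          unfolding E by (simp add: dist_commute)
      qed
      then have "dist (apply_bcontfun g y) (apply_bcontfun c y) \<le> r" if "y \<in> {0..1}" for y
        by (intro dense01[where h = "\<lambda>y. dist (apply_bcontfun g y) (apply_bcontfun c y)"] that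
            continuous_intros continuous_on_apply_bcontfun)
      then have "dist (apply_bcontfun g x) (apply_bcontfun c x) \<le> r" for x
        using C01_clamp[OF gC, of x] C01_clamp[OF c, of x] clamp01_in[of x] by metis
      then show "g \<in> {g \<in> C01. dist g c \<le> r}" using gC dist_bound by blast
    qed
  qed
  show ?thesis unfolding eq
    using EC by (intro S.countable_INT' cQ nQ) (auto intro: sigma_sets.Basic)
qed

lemma grid:
  fixes y :: real and N :: nat
  assumes y: "y \<in> {0..1}"
  shows "\<exists>j\<le>N. \<bar>y - real j / (real N + 1)\<bar> \<le> 1 / (real N + 1)"
proof (cases "y = 1")
  case True
  then show ?thesis by (intro exI[of _ N]) (auto simp: field_simps)
next
  case False
  then have y1: "y < 1" using y by auto
  define m where "m = real N + 1"
  have m: "m > 0" unfolding m_def by simp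
  define j where "j = nat \<lfloor>y * m\<rfloor>"
  have f0: "\<lfloor>y * m\<rfloor> \<ge> 0" using y m by auto
  have fl: "real j \<le> y * m" "y * m < real j + 1" unfolding j_def using f0
    by (auto simp: of_nat_nat)
  have "y * m < m" using y1 m by simp
  then have "real j < real N + 1" using fl unfolding m_def by linarith
  then have jN: "j \<le> N" by linarith
  have a: "real j / m \<le> y" using fl(1) m by (simp add: pos_divide_le_eq)
  have b: "y < (real j + 1) / m" using fl(2) m by (simp add: pos_less_divide_eq)
  have "(real j + 1) / m = real j / m + 1 / m" by (simp add: add_divide_distrib)
  then have "\<bar>y - real j / m\<bar> \<le> 1 / m" using a b by linarith
  then show ?thesis using jN unfolding m_def by blast
qed

definition SS :: "nat \<Rightarrow> nat \<Rightarrow> int list \<Rightarrow> (real, real) bcontfun set" where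
  "SS N M v = {f \<in> C01. (\<forall>j\<le>N. \<bar>apply_bcontfun f (real j / (real N + 1)) - real_of_int (v!j) / (real N + 1)\<bar> \<le> 1 / (real N + 1))
     \<and> (\<forall>s\<in>{0..1}. \<forall>t\<in>{0..1}. \<bar>s - t\<bar> \<le> 1 / (real N + 1) \<longrightarrow>
           \<bar>apply_bcontfun f s - apply_bcontfun f t\<bar> \<le> 1 / (real M + 1))}"

definition DD :: "(real, real) bcontfun set" where
  "DD = (\<lambda>(N,M,v). SOME f. f \<in> SS N M v) ` {(N,M,v). SS N M v \<noteq> {}}"

lemma DD_countable: "countable DD"
  unfolding DD_def by (rule countable_image) (rule countableI_type)

lemma DD_sub: "DD \<subseteq> C01"
proof
  fix x assume "x \<in> DD"
  then obtain N M v where "SS N M v \<noteq> {}" "x = (SOME f. f \<in> SS N M v)" unfolding DD_def by auto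
  then have "x \<in> SS N M v" by (simp add: some_in_eq)
  then show "x \<in> C01" by (simp add: SS_def)
qed

lemma DD_dense:
  assumes g: "g \<in> C01" and e: "e > 0"
  shows "\<exists>c\<in>DD. dist c g < e"
proof -
  obtain M :: nat where M: "inverse (real (Suc M)) < e/4" using reals_Archimedean[of "e/4"] e by auto
  have Mpos: "(0::real) < 1 / (real M + 1)" by simp
  have "uniformly_continuous_on {0..1} (apply_bcontfun g)"
    by (intro compact_uniformly_continuous continuous_on_apply_bcontfun) simp
  then obtain d where d: "d > 0" "\<forall>x\<in>{0..1}. \<forall>x'\<in>{0..1}. dist x' x < d \<longrightarrow>
      dist (apply_bcontfun g x') (apply_bcontfun g x) < 1 / (real M + 1)"
    unfolding uniformly_continuous_on_def using Mpos by metis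
  obtain N :: nat where N: "inverse (real (Suc N)) < min d (e/4)" using reals_Archimedean[of "min d (e/4)"] e d by auto
  define m where "m = real N + 1"
  have m: "m > 0" unfolding m_def by simp
  have Nd: "1 / m < d" "1 / m < e / 4" using N unfolding m_def by (auto simp: inverse_eq_divide add.commute)
  have Me: "1 / (real M + 1) < e / 4" using M by (auto simp: inverse_eq_divide add.commute)
  define v where "v = map (\<lambda>j. \<lfloor>m * apply_bcontfun g (real j / m)\<rfloor>) [0..<N+1]"
  have vj: "v ! j = \<lfloor>m * apply_bcontfun g (real j / m)\<rfloor>" if "j \<le> N" for j
    unfolding v_def using that by (simp del: upt_Suc)
  have flb: "\<bar>z - real_of_int \<lfloor>m * z\<rfloor> / m\<bar> \<le> 1 / m" for z
  proof -
    have "real_of_int \<lfloor>m * z\<rfloor> \<le> m * z" "m * z < real_of_int \<lfloor>m * z\<rfloor> + 1" by linarith+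
    then have a: "real_of_int \<lfloor>m * z\<rfloor> / m \<le> z" "z < (real_of_int \<lfloor>m * z\<rfloor> + 1) / m"
      using m by (simp_all add: pos_divide_le_eq pos_less_divide_eq mult.commute)
    have "(real_of_int \<lfloor>m * z\<rfloor> + 1) / m = real_of_int \<lfloor>m * z\<rfloor> / m + 1 / m" by (simp add: add_divide_distrib)
    then show ?thesis using a by linarith
  qed
  have gS: "g \<in> SS N M v"
    unfolding SS_def
  proof (intro CollectI conjI allI impI ballI g)
    fix j assume "j \<le> N"
    then show "\<bar>apply_bcontfun g (real j / (real N + 1)) - real_of_int (v ! j) / (real N + 1)\<bar> \<le> 1 / (real N + 1)"
      using flb vj unfolding m_def by simp
  next
    fix s t :: real assume st: "s \<in> {0..1}" "t \<in> {0..1}" "\<bar>s - t\<bar> \<le> 1 / (real N + 1)"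
    then have "dist s t < d" using Nd unfolding m_def by (simp add: dist_real_def)
    then show "\<bar>apply_bcontfun g s - apply_bcontfun g t\<bar> \<le> 1 / (real M + 1)"
      using d(2) st by (metis dist_real_def less_imp_le)
  qed
  define f where "f = (SOME f. f \<in> SS N M v)"
  have fS: "f \<in> SS N M v" unfolding f_def using gS by (metis someI_ex)
  have fD: "f \<in> DD" unfolding DD_def f_def using gS by (auto intro!: image_eqI[of _ _ "(N,M,v)"])
  have fC: "f \<in> C01" using fS by (simp add: SS_def)
  have bnd: "dist (apply_bcontfun f x) (apply_bcontfun g x) \<le> 2 / (real M + 1) + 2 / m" for x
  proof -
    define y where "y = clamp01 x"
    have y: "y \<in> {0..1}" unfolding y_def by (rule clamp01_in)
    obtain j where j: "j \<le> N" "\<bar>y - real j / m\<bar> \<le> 1 / m" using grid[OF y, of N] unfolding m_def by blast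
    define p where "p = real j / m"
    have p: "p \<in> {0..1}" unfolding p_def m_def using j(1) by (auto simp: field_simps)
    have 1: "\<bar>apply_bcontfun f y - apply_bcontfun f p\<bar> \<le> 1 / (real M + 1)"
      using fS y p j(2) unfolding SS_def p_def m_def by auto
    have 2: "\<bar>apply_bcontfun f p - real_of_int (v!j) / m\<bar> \<le> 1 / m"
      using fS j(1) unfolding SS_def p_def m_def by auto
    have 3: "\<bar>apply_bcontfun g p - real_of_int (v!j) / m\<bar> \<le> 1 / m"
      using gS j(1) unfolding SS_def p_def m_def by auto
    have 4: "\<bar>apply_bcontfun g p - apply_bcontfun g y\<bar> \<le> 1 / (real M + 1)"
    proof -
      have "dist p y < d" using j(2) Nd unfolding p_def by (simp add: dist_real_def abs_minus_commute)
      then show ?thesis using d(2) p y by (metis dist_real_def less_imp_le)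
    qed
    have "dist (apply_bcontfun f x) (apply_bcontfun g x) = \<bar>apply_bcontfun f y - apply_bcontfun g y\<bar>"
      unfolding y_def using C01_clamp[OF fC, of x] C01_clamp[OF g, of x] by (simp add: dist_real_def)
    also have "\<dots> \<le> 2 / (real M + 1) + 2 / m" using 1 2 3 4 by linarith
    finally show ?thesis .
  qed
  have "dist f g \<le> 2 / (real M + 1) + 2 / m" by (rule dist_bound[OF bnd])
  also have "\<dots> < e" using Nd Me by linarith
  finally show ?thesis using fD by blast
qed

lemma sigma_Cyl: "sigma_algebra C01 (sigma_sets C01 Cyl)"
  using sigma_algebra_sigma_sets cyl_alg by (metis algebra_iff_Un)

lemma open_in:
  assumes U: "open U"
  shows "U \<inter> C01 \<in> sigma_sets C01 Cyl"
proof -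
  interpret S: sigma_algebra C01 "sigma_sets C01 Cyl" by (rule sigma_Cyl)
  define CB where "CB p = {g \<in> C01. dist g (fst p) \<le> snd p}" for p :: "(real, real) bcontfun \<times> real"
  define I where "I = {p \<in> DD \<times> \<rat>. CB p \<subseteq> U}"
  have cI: "countable I" unfolding I_def
    by (rule countable_subset[of _ "DD \<times> \<rat>"]) (auto intro: countable_SIGMA DD_countable countable_rat)
  have eq: "U \<inter> C01 = (\<Union>p\<in>I. CB p)"
  proof
    show "(\<Union>p\<in>I. CB p) \<subseteq> U \<inter> C01" unfolding I_def CB_def by auto
  next
    show "U \<inter> C01 \<subseteq> (\<Union>p\<in>I. CB p)"
    proof
      fix g assume g: "g \<in> U \<inter> C01"
      then obtain e where e: "e > 0" "\<forall>y. dist y g < e \<longrightarrow> y \<in> U" using U unfolding open_dist by blast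
      obtain c where c: "c \<in> DD" "dist c g < e/3" using DD_dense[of g "e/3"] g e by auto
      obtain r where r: "r \<in> \<rat>" "e/3 < r" "r < 2*e/3" using Rats_dense_in_real[of "e/3" "2*e/3"] e by auto
      have sub: "CB (c, r) \<subseteq> U"
      proof
        fix y assume "y \<in> CB (c, r)"
        then have "dist y c \<le> r" unfolding CB_def by auto
        then have "dist y g < e" using c(2) r dist_triangle[of y g c] by linarith
        then show "y \<in> U" using e by blast
      qed
      have "g \<in> CB (c, r)" unfolding CB_def using g c(2) r by (auto simp: dist_commute)
      moreover have "(c, r) \<in> I" unfolding I_def using c r sub by auto
      ultimately show "g \<in> (\<Union>p\<in>I. CB p)" by blast
    qed
  qed
  have "CB p \<in> sigma_sets C01 Cyl" if "p \<in> I" for p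
    unfolding CB_def using that DD_sub unfolding I_def by (auto intro!: ball_in)
  then show ?thesis unfolding eq by (intro S.countable_UN' cI) auto
qed

lemma sets_eq: "sets C01_borel = sigma_sets C01 Cyl"
proof
  show "sigma_sets C01 Cyl \<subseteq> sets C01_borel"
    using sets.sigma_sets_subset[OF cyl_sets] space_C01 by simp
next
  show "sets C01_borel \<subseteq> sigma_sets C01 Cyl"
  proof
    fix A assume "A \<in> sets C01_borel"
    then obtain B where B: "B \<in> sets borel" "A = C01 \<inter> B"
      unfolding C01_borel_def sets_restrict_space by auto
    have CP: "Cyl \<subseteq> Pow C01" using cyl_alg by (simp add: algebra_iff_Un)
    have "(\<lambda>x. x) \<in> borel_measurable (sigma C01 Cyl)"
      by (rule borel_measurableI) (simp add: CP space_measure_of_conv sets_measure_of open_in Int_commute)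
    from measurable_sets[OF this B(1)] show "A \<in> sigma_sets C01 Cyl"
      using B(2) CP by (simp add: space_measure_of_conv sets_measure_of Int_commute)
  qed
qed

lemma cyl_repr:
  fixes T :: "real set" and B
  assumes T: "finite T" "T \<noteq> {}" "T \<subseteq> {0..1}" and B: "B \<in> sets (PiM T (\<lambda>_. borel :: real measure))"
  shows "\<exists>k t B'. k \<ge> 1 \<and> (\<forall>i<k. t i \<in> {0..1}) \<and> (\<forall>i j. i < j \<longrightarrow> j < k \<longrightarrow> t i < t j) \<and>
    B' \<in> sets (Rk k) \<and> (\<forall>f. restrict (apply_bcontfun f) T \<in> B \<longleftrightarrow> proj k t f \<in> B')"
proof -
  define s where "s = sorted_list_of_set T"
  define k where "k = length s"
  define t where "t i = s ! i" for i
  have setS: "set s = T" unfolding s_def using T by simp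
  have k1: "k \<ge> 1" unfolding k_def using setS T(2) by (cases s) auto
  have tin: "\<forall>i<k. t i \<in> {0..1}" unfolding t_def k_def using setS T(3) nth_mem by blast
  have str: "\<forall>i j. i < j \<longrightarrow> j < k \<longrightarrow> t i < t j"
    using sorted_list_of_set.strict_sorted_key_list_of_set[of T] unfolding t_def k_def s_def
    by (simp add: sorted_wrt_iff_nth_less)
  define idx where "idx x = (SOME i. i < k \<and> s ! i = x)" for x
  have idx: "idx x < k \<and> s ! idx x = x" if "x \<in> T" for x
  proof -
    have "\<exists>i. i < k \<and> s ! i = x" using that setS unfolding k_def by (auto simp: in_set_conv_nth)
    then show ?thesis unfolding idx_def by (rule someI_ex)
  qed
  define \<phi> where "\<phi> y = restrict (\<lambda>x. y (idx x)) T" for y :: "nat \<Rightarrow> real"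
  have \<phi>m: "\<phi> \<in> measurable (Rk k) (PiM T (\<lambda>_. borel :: real measure))"
    unfolding \<phi>_def Rk_def
    by (rule measurable_restrict, rule measurable_component_singleton) (use idx in auto)
  define B' where "B' = \<phi> -` B \<inter> space (Rk k)"
  have B': "B' \<in> sets (Rk k)" unfolding B'_def by (rule measurable_sets[OF \<phi>m B])
  have "restrict (apply_bcontfun f) T \<in> B \<longleftrightarrow> proj k t f \<in> B'" for f
  proof -
    have "\<phi> (proj k t f) = restrict (apply_bcontfun f) T"
      unfolding \<phi>_def proj_def t_def using idx by (auto intro!: ext)
    moreover have "proj k t f \<in> space (Rk k)" unfolding Rk_def proj_def by (simp add: space_PiM)
    ultimately show ?thesis unfolding B'_def by auto
  qed
  then show ?thesis using k1 tin str B' by blast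
qed

theorem mainTheorem2:
  fixes P :: "'w measure"
    and D :: "'a::metric_space set"
    and n :: nat
    and X :: "'a list \<Rightarrow> 'w \<Rightarrow> (real, real) bcontfun"
    and \<epsilon> \<delta> :: real
  assumes "prob_space P"
    and "n \<ge> 1"
    and meas: "\<And>d. d \<in> databases D n \<Longrightarrow> X d \<in> measurable P C01_borel"
    and "\<epsilon> \<ge> 0" and "0 \<le> \<delta>" and "\<delta> \<le> 1"
    and fdd: "\<And>k t d d' B.
       k \<ge> 1 \<Longrightarrow> (\<forall>i<k. t i \<in> {0..1}) \<Longrightarrow> (\<forall>i j. i < j \<longrightarrow> j < k \<longrightarrow> t i < t j) \<Longrightarrow>
       d \<in> databases D n \<Longrightarrow> d' \<in> databases D n \<Longrightarrow> neighbours d d' \<Longrightarrow>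
       B \<in> sets (Rk k) \<Longrightarrow>
       measure P {\<omega> \<in> space P. proj k t (X d \<omega>) \<in> B}
         \<le> exp \<epsilon> * measure P {\<omega> \<in> space P. proj k t (X d' \<omega>) \<in> B} + \<delta>"
  shows "\<forall>d \<in> databases D n. \<forall>d' \<in> databases D n. neighbours d d' \<longrightarrow>
           (\<forall>A \<in> sets C01_borel.
              measure P {\<omega> \<in> space P. X d \<omega> \<in> A}
                \<le> exp \<epsilon> * measure P {\<omega> \<in> space P. X d' \<omega> \<in> A} + \<delta>)"
proof (intro ballI impI)
  fix d d' A assume d: "d \<in> databases D n" and d': "d' \<in> databases D n" and nb: "neighbours d d'"
    and A: "A \<in> sets C01_borel"
  interpret P: prob_space P by fact
  have Xm: "X d \<in> measurable P C01_borel" and Xm': "X d' \<in> measurable P C01_borel"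
    using meas d d' by auto
  define \<mu> where "\<mu> = distr P C01_borel (X d)"
  define \<nu> where "\<nu> = distr P C01_borel (X d')"
  have fm: "finite_measure \<mu>" unfolding \<mu>_def by (rule prob_space.axioms(1)[OF P.prob_space_distr[OF Xm]])
  have fm': "finite_measure \<nu>" unfolding \<nu>_def by (rule prob_space.axioms(1)[OF P.prob_space_distr[OF Xm']])
  have s1: "sets \<mu> = sigma_sets C01 Cyl" unfolding \<mu>_def by (simp add: sets_eq)
  have s2: "sets \<nu> = sigma_sets C01 Cyl" unfolding \<nu>_def by (simp add: sets_eq)
  have mu: "measure \<mu> S = measure P {\<omega> \<in> space P. X d \<omega> \<in> S}" if "S \<in> sets C01_borel" for S
    unfolding \<mu>_def using measure_distr[OF Xm that] by (simp add: vimage_def Int_def conj_commute)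
  have nu: "measure \<nu> S = measure P {\<omega> \<in> space P. X d' \<omega> \<in> S}" if "S \<in> sets C01_borel" for S
    unfolding \<nu>_def using measure_distr[OF Xm' that] by (simp add: vimage_def Int_def conj_commute)
  have inC: "X d \<omega> \<in> C01" "X d' \<omega> \<in> C01" if "\<omega> \<in> space P" for \<omega>
    using measurable_space[OF Xm that] measurable_space[OF Xm' that] space_C01 by auto
  have cyl: "measure \<mu> C \<le> exp \<epsilon> * measure \<nu> C + \<delta>" if C: "C \<in> Cyl" for C
  proof -
    obtain T B where CT: "C = C01 \<inter> {f. restrict (apply_bcontfun f) T \<in> B}"
      and T: "finite T" "T \<noteq> {}" "T \<subseteq> {0..1}" and B: "B \<in> sets (PiM T (\<lambda>_. borel :: real measure))"
      using C unfolding Cyl_def by blast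
    obtain k t B' where k: "k \<ge> 1" "\<forall>i<k. t i \<in> {0..1}" "\<forall>i j. i < j \<longrightarrow> j < k \<longrightarrow> t i < t j"
      "B' \<in> sets (Rk k)" and eqv: "\<And>f. restrict (apply_bcontfun f) T \<in> B \<longleftrightarrow> proj k t f \<in> B'"
      using cyl_repr[OF T B] by blast
    have CS: "C \<in> sets C01_borel" using C cyl_sets by auto
    have e1: "{\<omega> \<in> space P. X d \<omega> \<in> C} = {\<omega> \<in> space P. proj k t (X d \<omega>) \<in> B'}"
      unfolding CT using inC eqv by auto
    have e2: "{\<omega> \<in> space P. X d' \<omega> \<in> C} = {\<omega> \<in> space P. proj k t (X d' \<omega>) \<in> B'}"
      unfolding CT using inC eqv by auto
    show ?thesis unfolding mu[OF CS] nu[OF CS] e1 e2 by (rule fdd[OF k(1-3) d d' nb k(4)])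
  qed
  interpret m1: finite_measure \<mu> by (rule fm)
  interpret m2: finite_measure \<nu> by (rule fm')
  have AS: "A \<in> sigma_sets C01 Cyl" using A sets_eq by simp
  have GS: "Cyl \<subseteq> sigma_sets C01 Cyl" by (auto intro: sigma_sets.Basic)
  interpret S: sigma_algebra C01 "sigma_sets C01 Cyl" by (rule sigma_Cyl)
  have "measure \<mu> A \<le> exp \<epsilon> * measure \<nu> A + \<delta>"
  proof (rule field_le_epsilon)
    fix e :: real assume e: "e > 0"
    define e' where "e' = e / (exp \<epsilon> + 1)"
    have e': "e' > 0" unfolding e'_def using e by (simp add: add_pos_pos)
    obtain C where C: "C \<in> Cyl" "measure \<mu> (sdiff A C) < e'" "measure \<nu> (sdiff A C) < e'"
      using approx_sigma[OF cyl_alg fm fm' s1 s2 AS e'] by blast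
    have CS: "C \<in> sigma_sets C01 Cyl" using C GS by auto
    have SD: "sdiff A C \<in> sigma_sets C01 Cyl" unfolding sdiff_def using AS CS by (intro S.Un S.Diff)
    have "measure \<mu> A \<le> measure \<mu> (C \<union> sdiff A C)"
      using CS SD s1 by (intro m1.finite_measure_mono) (auto simp: sdiff_def)
    also have "\<dots> \<le> measure \<mu> C + measure \<mu> (sdiff A C)"
      using CS SD s1 by (intro measure_Un_le) auto
    finally have 1: "measure \<mu> A \<le> measure \<mu> C + e'" using C by linarith
    have "measure \<nu> C \<le> measure \<nu> (A \<union> sdiff A C)"
      using AS SD s2 by (intro m2.finite_measure_mono) (auto simp: sdiff_def)
    also have "\<dots> \<le> measure \<nu> A + measure \<nu> (sdiff A C)"
      using AS SD s2 by (intro measure_Un_le) auto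
    finally have 2: "measure \<nu> C \<le> measure \<nu> A + e'" using C by linarith
    have "exp \<epsilon> * measure \<nu> C \<le> exp \<epsilon> * (measure \<nu> A + e')"
      using 2 by (intro mult_left_mono) auto
    moreover have "e' * (exp \<epsilon> + 1) = e" proof - have "exp \<epsilon> + 1 \<noteq> 0" using exp_gt_zero[of \<epsilon>] by linarith then show ?thesis by (simp add: e'_def) qed
    ultimately show "measure \<mu> A \<le> exp \<epsilon> * measure \<nu> A + \<delta> + e"
      using 1 cyl[OF C(1)] by (simp add: algebra_simps)
  qed
  then show "measure P {\<omega> \<in> space P. X d \<omega> \<in> A} \<le> exp \<epsilon> * measure P {\<omega> \<in> space P. X d' \<omega> \<in> A} + \<delta>"
    using mu[OF A] nu[OF A] by simp
qed

end
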